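(* Let $\Delta$ be a $d$-dimensional simplicial complex on vertex set $[n]$ with $d>0$ and $f_{d-1}\ge f_d$, let $R=\mathbb{K}[x_1,\dots,x_n]$, $J=I_\Delta+(x_1^{d+2},\dots,x_n^{d+2})$ and $t=\binom{d+2}{2}$. Then $\dim_{\mathbb{K}}(R/J)_{t-1}\ge\dim_{\mathbb{K}}(R/J)_t$. In particular, this inequality holds when $\Delta$ is a $d$-dimensional orientable pseudomanifold without boundary with $d>0$.
   Context: $f_i$ is the number of $i$-dimensional faces of $\Delta$ and $I_\Delta$ is its Stanley–Reisner ideal. A $d$-dimensional pseudomanifold is a pure $d$-dimensional complex that is strongly connected (any two facets are joined by a sequence of facets with consecutive ones sharing a $(d-1)$-face) and in which every $(d-1)$-face lies in at most two facets; it is without boundary if every $(d-1)$-face lies in exactly two facets, and orientable over $\mathbb{K}$ if moreover $\tilde H_d(\Delta;\mathbb{K})\ne0$. *)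

theory Defs
  imports Main "HOL-Library.Poly_Mapping"
begin

text \<open>The ring R = K[x_1..x_n] consists of the polynomials all of whose monomials only
  involve the variables 1..n.\<close>

type_synonym 'k mpoly = "(nat \<Rightarrow>\<^sub>0 nat) \<Rightarrow>\<^sub>0 'k"

definition var :: "nat \<Rightarrow> 'k::field mpoly" where
  "var i = Poly_Mapping.single (Poly_Mapping.single i 1) 1"

definition const :: "'k::field \<Rightarrow> 'k mpoly" where
  "const c = Poly_Mapping.single 0 c"

definition mono_deg :: "(nat \<Rightarrow>\<^sub>0 nat) \<Rightarrow> nat" where
  "mono_deg m = (\<Sum>i\<in>Poly_Mapping.keys m. Poly_Mapping.lookup m i)"

definition in_R :: "nat \<Rightarrow> 'k::field mpoly \<Rightarrow> bool" where
  "in_R n p \<longleftrightarrow> (\<forall>m\<in>Poly_Mapping.keys p. Poly_Mapping.keys m \<subseteq> {1..n})"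

definition homog_piece :: "nat \<Rightarrow> nat \<Rightarrow> 'k::field mpoly set" where
  "homog_piece n k = {p. in_R n p \<and> (\<forall>m\<in>Poly_Mapping.keys p. mono_deg m = k)}"

definition ideal_gen :: "nat \<Rightarrow> 'k::field mpoly set \<Rightarrow> 'k mpoly set" where
  "ideal_gen n G = {p. \<exists>S q. finite S \<and> S \<subseteq> G \<and> (\<forall>g\<in>S. in_R n (q g))
                          \<and> p = (\<Sum>g\<in>S. q g * g)}"

definition lin_indep_mod :: "'k::field mpoly set \<Rightarrow> 'k mpoly set \<Rightarrow> bool" where
  "lin_indep_mod W S \<longleftrightarrow>
     (\<forall>c. (\<Sum>s\<in>S. const (c s) * s) \<in> W \<longrightarrow> (\<forall>s\<in>S. c s = 0))"

text \<open>dim_K (R/J)_k: the dimension of the image of R_k in R/J, i.e. the maximal size of a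
  subset of R_k that is linearly independent in the quotient R/J.\<close>
definition quot_dim :: "nat \<Rightarrow> 'k::field mpoly set \<Rightarrow> nat \<Rightarrow> nat" where
  "quot_dim n J k =
     Max {card S | S. finite S \<and> S \<subseteq> homog_piece n k \<and> lin_indep_mod J S}"

definition simplicial_complex :: "nat \<Rightarrow> nat set set \<Rightarrow> bool" where
  "simplicial_complex n \<Delta> \<longleftrightarrow>
     {} \<in> \<Delta> \<and> (\<forall>F\<in>\<Delta>. F \<subseteq> {1..n}) \<and> (\<forall>F\<in>\<Delta>. \<forall>G. G \<subseteq> F \<longrightarrow> G \<in> \<Delta>)
     \<and> (\<forall>i\<in>{1..n}. {i} \<in> \<Delta>)"

definition cdim :: "nat set set \<Rightarrow> nat \<Rightarrow> bool" where
  "cdim \<Delta> d \<longleftrightarrow> (\<exists>F\<in>\<Delta>. card F = d + 1) \<and> (\<forall>F\<in>\<Delta>. card F \<le> d + 1)"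

definition fvec :: "nat set set \<Rightarrow> nat \<Rightarrow> nat" where
  "fvec \<Delta> i = card {F\<in>\<Delta>. card F = i + 1}"

definition SR_ideal :: "nat \<Rightarrow> nat set set \<Rightarrow> 'k::field mpoly set" where
  "SR_ideal n \<Delta> = ideal_gen n {(\<Prod>i\<in>F. var i) | F. F \<subseteq> {1..n} \<and> F \<notin> \<Delta>}"

definition J_ideal :: "nat \<Rightarrow> nat set set \<Rightarrow> nat \<Rightarrow> 'k::field mpoly set" where
  "J_ideal n \<Delta> d = ideal_gen n
     ({(\<Prod>i\<in>F. var i) | F. F \<subseteq> {1..n} \<and> F \<notin> \<Delta>} \<union> {var i ^ (d + 2) | i. i \<in> {1..n}})"

definition pure :: "nat set set \<Rightarrow> nat \<Rightarrow> bool" where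
  "pure \<Delta> d \<longleftrightarrow> (\<forall>F\<in>\<Delta>. \<exists>G\<in>\<Delta>. F \<subseteq> G \<and> card G = d + 1)"

definition strongly_connected :: "nat set set \<Rightarrow> nat \<Rightarrow> bool" where
  "strongly_connected \<Delta> d \<longleftrightarrow>
     (\<forall>F\<in>\<Delta>. \<forall>G\<in>\<Delta>. card F = d + 1 \<longrightarrow> card G = d + 1 \<longrightarrow>
        (F, G) \<in> {(A, B). A \<in> \<Delta> \<and> B \<in> \<Delta> \<and> card A = d + 1 \<and> card B = d + 1
                        \<and> card (A \<inter> B) = d}\<^sup>*)"

definition pseudomanifold :: "nat set set \<Rightarrow> nat \<Rightarrow> bool" where
  "pseudomanifold \<Delta> d \<longleftrightarrow> cdim \<Delta> d \<and> pure \<Delta> d \<and> strongly_connected \<Delta> d \<and>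
     (\<forall>G\<in>\<Delta>. card G = d \<longrightarrow> card {F\<in>\<Delta>. card F = d + 1 \<and> G \<subseteq> F} \<le> 2)"

definition without_boundary :: "nat set set \<Rightarrow> nat \<Rightarrow> bool" where
  "without_boundary \<Delta> d \<longleftrightarrow>
     (\<forall>G\<in>\<Delta>. card G = d \<longrightarrow> card {F\<in>\<Delta>. card F = d + 1 \<and> G \<subseteq> F} = 2)"

text \<open>Simplicial boundary coefficient: the face F (vertices in increasing order) minus its
  vertex v gets sign (-1)^(position of v in F).\<close>
definition bsign :: "nat set \<Rightarrow> nat set \<Rightarrow> 'k::field" where
  "bsign F G = (-1) ^ card {u\<in>F. u < the_elem (F - G)}"

text \<open>For a d-dimensional complex there are no (d+1)-faces, so the top reduced simplicial
  homology H~_d(Delta;K) equals the space of d-cycles ker(boundary_d); it is nonzero iff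
  there is a nonzero d-chain with zero boundary.\<close>
definition top_homology_nonzero :: "'k::field itself \<Rightarrow> nat set set \<Rightarrow> nat \<Rightarrow> bool" where
  "top_homology_nonzero _ \<Delta> d \<longleftrightarrow>
     (\<exists>c :: nat set \<Rightarrow> 'k.
        (\<exists>F\<in>\<Delta>. card F = d + 1 \<and> c F \<noteq> 0) \<and>
        (\<forall>G\<in>\<Delta>. card G = d \<longrightarrow>
           (\<Sum>F\<in>{F\<in>\<Delta>. card F = d + 1 \<and> G \<subseteq> F}. bsign F G * c F) = 0))"

end

theory Submission
  imports Defs "HOL.Vector_Spaces"
begin

fun W :: "nat \<Rightarrow> nat \<Rightarrow> int \<Rightarrow> nat" where
  "W D 0 k = (if k = 0 then 1 else 0)"
| "W D (Suc j) k = (\<Sum>i<Suc D. W D j (k - 1 - int i))"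

lemma W_neg: "k < 0 \<Longrightarrow> W D j k = 0"
  by (induction j arbitrary: k) auto

lemma W_sym: "W D j k = W D j (int j * (int D + 2) - k)"
proof (induction j arbitrary: k)
  case 0
  then show ?case by simp
next
  case (Suc j)
  have "W D (Suc j) (int (Suc j) * (int D + 2) - k)
      = (\<Sum>i<Suc D. W D j (int (Suc j) * (int D + 2) - k - 1 - int i))" by simp
  also have "\<dots> = (\<Sum>i<Suc D. W D j (k - 1 - int (D - i)))"
  proof (rule sum.cong[OF refl])
    fix i assume "i \<in> {..<Suc D}"
    then have "int (D - i) = int D - int i" by simp
    then show "W D j (int (Suc j) * (int D + 2) - k - 1 - int i) = W D j (k - 1 - int (D - i))"
      using Suc.IH[of "int (Suc j) * (int D + 2) - k - 1 - int i"]
      by (simp add: algebra_simps)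
  qed
  also have "\<dots> = (\<Sum>i<Suc D. W D j (k - 1 - int i))"
    using sum.nat_diff_reindex[of "\<lambda>i. W D j (k - 1 - int i)" "Suc D"] by simp
  finally show ?case by simp
qed

lemma W_step: "int (W D (Suc j) s) - int (W D (Suc j) (s - 1))
   = int (W D j (s - 1)) - int (W D j (s - int D - 2))"
proof -
  have a: "(\<Sum>i<Suc D. W D j (s - 1 - int i)) = W D j (s - 1) + (\<Sum>i<D. W D j (s - 2 - int i))"
    by (subst sum.lessThan_Suc_shift) (simp add: algebra_simps)
  have b: "(\<Sum>i<Suc D. W D j (s - 1 - 1 - int i)) = (\<Sum>i<D. W D j (s - 2 - int i)) + W D j (s - int D - 2)"
    by (simp add: algebra_simps)
  show ?thesis using a b by simp
qed

lemma sym_mono_Q: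
  fixes f :: "int \<Rightarrow> nat" and c :: int
  assumes sym: "\<And>x. f x = f (c - x)" and mono: "\<And>s. c \<le> 2*s \<Longrightarrow> f (s+1) \<le> f s"
    and h: "\<bar>2*x - c\<bar> \<le> \<bar>2*y - c\<bar>"
  shows "f y \<le> f x"
proof -
  have mono2: "c \<le> 2*a \<Longrightarrow> f (a + int k) \<le> f a" for a k
  proof (induction k)
    case 0 then show ?case by simp
  next
    case (Suc k)
    have "f (a + int (Suc k)) = f ((a + int k) + 1)" by (simp add: algebra_simps)
    also have "\<dots> \<le> f (a + int k)" using mono[of "a + int k"] Suc.prems by simp
    finally show ?case using Suc by simp
  qed
  define x' where "x' = (if c \<le> 2*x then x else c - x)"
  define y' where "y' = (if c \<le> 2*y then y else c - y)"
  have fx: "f x' = f x" using sym[of x] by (simp add: x'_def)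
  have fy: "f y' = f y" using sym[of y] by (simp add: y'_def)
  have cx: "c \<le> 2*x'" "x' \<le> y'" using h by (auto simp: x'_def y'_def abs_if split: if_splits)
  have "y' = x' + int (nat (y' - x'))" using cx by simp
  then have "f y' \<le> f x'" using mono2[OF cx(1), of "nat (y' - x')"] by simp
  then show ?thesis using fx fy by simp
qed

lemma W_mono: "int j * (int D + 2) \<le> 2*s \<Longrightarrow> W D j (s+1) \<le> W D j s"
proof (induction j arbitrary: s)
  case 0
  then show ?case by simp
next
  case (Suc j)
  have Q: "W D j s \<le> W D j (s - int D - 1)"
  proof (rule sym_mono_Q[of "W D j" "int j * (int D + 2)"])
    show "W D j x = W D j (int j * (int D + 2) - x)" for x by (rule W_sym)
    show "int j * (int D + 2) \<le> 2 * s' \<Longrightarrow> W D j (s' + 1) \<le> W D j s'" for s' by (rule Suc.IH)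
    show "\<bar>2 * (s - int D - 1) - int j * (int D + 2)\<bar> \<le> \<bar>2 * s - int j * (int D + 2)\<bar>"
      using Suc.prems by (simp add: algebra_simps abs_if)
  qed
  have e: "int (W D (Suc j) (s+1)) - int (W D (Suc j) s) = int (W D j s) - int (W D j (s - int D - 1))"
    using W_step[of D j "s+1"] by (simp del: W.simps add: algebra_simps)
  show ?case using e Q by linarith
qed

lemma W_Q: "\<bar>2*x - int j * (int D + 2)\<bar> \<le> \<bar>2*y - int j * (int D + 2)\<bar> \<Longrightarrow> W D j y \<le> W D j x"
  by (rule sym_mono_Q[of "W D j" "int j * (int D + 2)"]) (auto intro: W_sym W_mono)

definition Tset :: "nat \<Rightarrow> nat set \<Rightarrow> int \<Rightarrow> (nat \<Rightarrow>\<^sub>0 nat) set" where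
  "Tset D F k = {a. Poly_Mapping.keys a = F \<and> (\<forall>i\<in>F. Poly_Mapping.lookup a i \<le> D+1)
                   \<and> int (\<Sum>i\<in>F. Poly_Mapping.lookup a i) = k}"

lemma Tset_empty: "Tset D {} k = (if k = 0 then {0} else {})"
  by (auto simp: Tset_def)

lemma Tset_insert:
  assumes "finite F" "v \<notin> F"
  shows "Tset D (insert v F) k
     = (\<Union>i<Suc D. (\<lambda>a. a + Poly_Mapping.single v (Suc i)) ` Tset D F (k - 1 - int i))"
proof
  show "Tset D (insert v F) k
     \<subseteq> (\<Union>i<Suc D. (\<lambda>a. a + Poly_Mapping.single v (Suc i)) ` Tset D F (k - 1 - int i))"
  proof
    fix b assume b: "b \<in> Tset D (insert v F) k"
    define c where "c = Poly_Mapping.lookup b v"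
    have "v \<in> Poly_Mapping.keys b" using b by (simp add: Tset_def)
    then have c1: "c \<ge> 1" "c \<le> D + 1" using b by (auto simp: Tset_def c_def in_keys_iff)
    define a where "a = b - Poly_Mapping.single v c"
    have la: "Poly_Mapping.lookup a u = (if u = v then 0 else Poly_Mapping.lookup b u)" for u
      by (auto simp: a_def lookup_minus lookup_single c_def)
    have "Poly_Mapping.keys a = Poly_Mapping.keys b - {v}"
      by (auto simp: in_keys_iff la split: if_splits)
    then have ka: "Poly_Mapping.keys a = F"
      using b assms(2) by (auto simp: Tset_def)
    have ba: "b = a + Poly_Mapping.single v c"
      by (rule poly_mapping_eqI) (auto simp: lookup_add la lookup_single c_def)
    have sb: "(\<Sum>i\<in>insert v F. Poly_Mapping.lookup b i) = c + (\<Sum>i\<in>F. Poly_Mapping.lookup a i)"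
    proof -
      have "(\<Sum>i\<in>F. Poly_Mapping.lookup a i) = (\<Sum>i\<in>F. Poly_Mapping.lookup b i)"
        using assms(2) by (intro sum.cong) (auto simp: la)
      then show ?thesis using assms by (simp add: c_def)
    qed
    have kb: "int (\<Sum>i\<in>insert v F. Poly_Mapping.lookup b i) = k" using b by (simp add: Tset_def)
    have ks: "int c + int (\<Sum>i\<in>F. Poly_Mapping.lookup a i) = k" using kb sb by (metis of_nat_add)
    have bd: "\<forall>i\<in>F. Poly_Mapping.lookup a i \<le> D+1" using b assms(2) by (auto simp: Tset_def la)
    have "a \<in> Tset D F (k - 1 - int (c - 1))"
      unfolding Tset_def using ka bd ks c1 by auto
    moreover have "c - 1 \<in> {..<Suc D}" using c1 by auto
    moreover have "Suc (c - 1) = c" using c1 by auto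
    ultimately show "b \<in> (\<Union>i<Suc D. (\<lambda>a. a + Poly_Mapping.single v (Suc i)) ` Tset D F (k - 1 - int i))"
      using ba by force
  qed
next
  show "(\<Union>i<Suc D. (\<lambda>a. a + Poly_Mapping.single v (Suc i)) ` Tset D F (k - 1 - int i))
      \<subseteq> Tset D (insert v F) k"
  proof
    fix x assume "x \<in> (\<Union>i<Suc D. (\<lambda>a. a + Poly_Mapping.single v (Suc i)) ` Tset D F (k - 1 - int i))"
    then obtain i a where i: "i \<in> {..<Suc D}" and a: "a \<in> Tset D F (k - 1 - int i)"
      and x: "x = a + Poly_Mapping.single v (Suc i)" by blast
    have lb: "Poly_Mapping.lookup (a + Poly_Mapping.single v (Suc i)) u
        = (if u = v then Suc i else Poly_Mapping.lookup a u)" for u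
      using a assms(2) by (auto simp: lookup_add lookup_single Tset_def in_keys_iff)
    have kb: "Poly_Mapping.keys (a + Poly_Mapping.single v (Suc i)) = insert v F"
    proof -
      have "Poly_Mapping.keys (a + Poly_Mapping.single v (Suc i)) = insert v (Poly_Mapping.keys a)"
        by (auto simp: in_keys_iff lb split: if_splits)
      then show ?thesis using a by (simp add: Tset_def)
    qed
    have sb: "(\<Sum>u\<in>insert v F. Poly_Mapping.lookup (a + Poly_Mapping.single v (Suc i)) u)
        = Suc i + (\<Sum>u\<in>F. Poly_Mapping.lookup a u)"
    proof -
      have "(\<Sum>u\<in>F. Poly_Mapping.lookup (a + Poly_Mapping.single v (Suc i)) u) = (\<Sum>u\<in>F. Poly_Mapping.lookup a u)"
        using assms(2) by (intro sum.cong) (auto simp: lb)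
      then show ?thesis using assms by (simp add: lb)
    qed
    have ka: "int (\<Sum>u\<in>F. Poly_Mapping.lookup a u) = k - 1 - int i" using a unfolding Tset_def by blast
    have "int (\<Sum>u\<in>insert v F. Poly_Mapping.lookup (a + Poly_Mapping.single v (Suc i)) u)
        = int (Suc i) + int (\<Sum>u\<in>F. Poly_Mapping.lookup a u)" by (simp only: sb of_nat_add)
    then have s: "int (\<Sum>u\<in>insert v F. Poly_Mapping.lookup (a + Poly_Mapping.single v (Suc i)) u) = k"
      using ka by simp
    have bd: "\<forall>u\<in>insert v F. Poly_Mapping.lookup (a + Poly_Mapping.single v (Suc i)) u \<le> D + 1"
      using a i by (auto simp: Tset_def lb)
    show "x \<in> Tset D (insert v F) k"
      unfolding x Tset_def using s bd kb by blast
  qed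
qed

lemma Tset_card: "finite F \<Longrightarrow> finite (Tset D F k) \<and> card (Tset D F k) = W D (card F) k"
proof (induction F arbitrary: k rule: finite_induct)
  case empty
  then show ?case by (simp add: Tset_empty)
next
  case (insert v F)
  let ?f = "\<lambda>i a. a + Poly_Mapping.single v (Suc i)"
  have inj: "inj_on (?f i) A" for i A by (rule inj_onI) simp
  have disj: "\<forall>i\<in>{..<Suc D}. \<forall>j\<in>{..<Suc D}. i \<noteq> j \<longrightarrow>
      ?f i ` Tset D F (k - 1 - int i) \<inter> ?f j ` Tset D F (k - 1 - int j) = {}"
  proof (intro ballI impI)
    fix i j :: nat assume "i \<noteq> j"
    show "?f i ` Tset D F (k - 1 - int i) \<inter> ?f j ` Tset D F (k - 1 - int j) = {}"
    proof (rule ccontr)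
      assume "?f i ` Tset D F (k - 1 - int i) \<inter> ?f j ` Tset D F (k - 1 - int j) \<noteq> {}"
      then obtain a b where a: "a \<in> Tset D F (k - 1 - int i)" and b: "b \<in> Tset D F (k - 1 - int j)"
        and e: "?f i a = ?f j b" by auto
      have "Poly_Mapping.lookup (?f i a) v = Poly_Mapping.lookup (?f j b) v" using e by simp
      moreover have "Poly_Mapping.lookup a v = 0" "Poly_Mapping.lookup b v = 0"
        using a b insert.hyps(2) by (auto simp: Tset_def in_keys_iff)
      ultimately show False using \<open>i \<noteq> j\<close> by (simp add: lookup_add)
    qed
  qed
  have fin: "finite (Tset D F (k - 1 - int i))" for i using insert.IH by blast
  have "card (Tset D (insert v F) k) = (\<Sum>i<Suc D. card (?f i ` Tset D F (k - 1 - int i)))"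
    unfolding Tset_insert[OF insert.hyps] by (rule card_UN_disjoint) (use fin disj in auto)
  also have "\<dots> = (\<Sum>i<Suc D. W D (card F) (k - 1 - int i))"
    using insert.IH by (simp add: card_image[OF inj])
  also have "\<dots> = W D (card (insert v F)) k" using insert.hyps by simp
  finally show ?case unfolding Tset_insert[OF insert.hyps] using fin by auto
qed

lemma lookup_const_mult: "Poly_Mapping.lookup (const c * p) m = c * Poly_Mapping.lookup p m"
proof -
  have "const c * p = Poly_Mapping.map ((*) c) p"
    by (simp add: const_def mult_map_scale_conv_mult)
  then show ?thesis by (simp add: Poly_Mapping.map.rep_eq when_def)
qed

lemma keys_const_mult: "Poly_Mapping.keys (const c * p) \<subseteq> Poly_Mapping.keys p"
  by (auto simp: in_keys_iff lookup_const_mult)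

lemma const_single: "const c * Poly_Mapping.single m (1::'k::field) = Poly_Mapping.single m c"
  by (simp add: const_def mult_single)

lemma vs: "vector_space (\<lambda>(c::'k::field) (p::'k mpoly). const c * p)"
  unfolding vector_space_def const_def
  by (simp add: distrib_left distrib_right single_add mult_single mult.assoc[symmetric])

lemma prod_var: "finite F \<Longrightarrow> (\<Prod>i\<in>F. var i) = Poly_Mapping.single (\<Sum>i\<in>F. Poly_Mapping.single i (1::nat)) (1::'k::field)"
  by (induction F rule: finite_induct) (simp_all add: var_def mult_single)

lemma var_pow: "(var i :: 'k::field mpoly) ^ k = Poly_Mapping.single (Poly_Mapping.single i k) 1"
  by (induction k) (simp_all add: var_def mult_single single_add[symmetric])

lemma lookup_indic: "finite F \<Longrightarrow> Poly_Mapping.lookup (\<Sum>i\<in>F. Poly_Mapping.single i (1::nat)) u = (if u \<in> F then 1 else 0)"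
  by (simp add: lookup_sum lookup_single when_def)

definition good :: "nat set set \<Rightarrow> nat \<Rightarrow> (nat \<Rightarrow>\<^sub>0 nat) \<Rightarrow> bool" where
  "good \<Delta> d m \<longleftrightarrow> Poly_Mapping.keys m \<in> \<Delta> \<and> (\<forall>i. Poly_Mapping.lookup m i \<le> d + 1)"

definition Gens :: "nat \<Rightarrow> nat set set \<Rightarrow> nat \<Rightarrow> 'k::field mpoly set" where
  "Gens n \<Delta> d = {(\<Prod>i\<in>F. var i) | F. F \<subseteq> {1..n} \<and> F \<notin> \<Delta>} \<union> {var i ^ (d + 2) | i. i \<in> {1..n}}"

lemma J_def': "J_ideal n \<Delta> d = ideal_gen n (Gens n \<Delta> d)"
  by (simp add: J_ideal_def Gens_def)

lemma J_keys_bad: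
  assumes sc: "simplicial_complex n \<Delta>" and p: "p \<in> J_ideal n \<Delta> d" and m: "m \<in> Poly_Mapping.keys p"
  shows "\<not> good \<Delta> d m"
proof
  assume g: "good \<Delta> d m"
  obtain S q where S: "finite S" "S \<subseteq> Gens n \<Delta> d" and pe: "p = (\<Sum>g\<in>S. q g * g)"
    using p unfolding J_def' ideal_gen_def by blast
  obtain g where gS: "g \<in> S" and mg: "m \<in> Poly_Mapping.keys (q g * g)"
    using m keys_sum[of "\<lambda>g. q g * g" S] pe by blast
  obtain a b where ab: "m = a + b" "b \<in> Poly_Mapping.keys g"
    using keys_mult[of "q g" g] mg by blast
  have "g \<in> Gens n \<Delta> d" using gS S by blast
  then consider (F) F where "F \<subseteq> {1..n}" "F \<notin> \<Delta>" "g = (\<Prod>i\<in>F. var i)"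
    | (P) i where "g = var i ^ (d + 2)" unfolding Gens_def by blast
  then show False
  proof cases
    case F
    have fin: "finite F" using F(1) finite_subset by blast
    have "b = (\<Sum>i\<in>F. Poly_Mapping.single i (1::nat))" using ab(2) F(3) by (simp add: prod_var[OF fin])
    then have lb: "Poly_Mapping.lookup b u = (if u \<in> F then 1 else 0)" for u using lookup_indic[OF fin] by simp
    have "F \<subseteq> Poly_Mapping.keys m" by (auto simp: ab(1) in_keys_iff lookup_add lb)
    then have "F \<in> \<Delta>" using g sc unfolding good_def simplicial_complex_def by blast
    then show False using F(2) by blast
  next
    case P
    have ge: "g = Poly_Mapping.single (Poly_Mapping.single i (d+2)) 1" unfolding P by (rule var_pow)
    have "b = Poly_Mapping.single i (d+2)" using ab(2) ge by simp
    then have ge2: "Poly_Mapping.lookup m i \<ge> d + 2" by (simp add: ab(1) lookup_add)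
    have "Poly_Mapping.lookup m i \<le> d + 1" using g unfolding good_def by blast
    then show False using ge2 by linarith
  qed
qed

lemma in_R_add: "in_R n p \<Longrightarrow> in_R n q \<Longrightarrow> in_R n (p + q)"
  unfolding in_R_def
proof (intro ballI)
  fix m assume "\<forall>m\<in>Poly_Mapping.keys p. Poly_Mapping.keys m \<subseteq> {1..n}" "\<forall>m\<in>Poly_Mapping.keys q. Poly_Mapping.keys m \<subseteq> {1..n}"
    "m \<in> Poly_Mapping.keys (p + q)"
  moreover have "m \<in> Poly_Mapping.keys p \<or> m \<in> Poly_Mapping.keys q" using keys_add[of p q] \<open>m \<in> _\<close> by auto
  ultimately show "Poly_Mapping.keys m \<subseteq> {1..n}" by blast
qed

lemma in_R_zero: "in_R n 0"
  by (simp add: in_R_def)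

lemma ideal_gen_zero: "0 \<in> ideal_gen n G"
  unfolding ideal_gen_def by (rule CollectI, rule exI[of _ "{}"], rule exI[of _ "\<lambda>_. 0"]) simp

lemma ideal_gen_add:
  assumes "p \<in> ideal_gen n G" "p' \<in> ideal_gen n G"
  shows "p + p' \<in> ideal_gen n G"
proof -
  obtain S q where S: "finite S" "S \<subseteq> G" "\<forall>g\<in>S. in_R n (q g)" and pe: "p = (\<Sum>g\<in>S. q g * g)"
    using assms(1) unfolding ideal_gen_def by blast
  obtain S' q' where S': "finite S'" "S' \<subseteq> G" "\<forall>g\<in>S'. in_R n (q' g)" and pe': "p' = (\<Sum>g\<in>S'. q' g * g)"
    using assms(2) unfolding ideal_gen_def by blast
  define r where "r g = (if g \<in> S then q g else 0) + (if g \<in> S' then q' g else 0)" for g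
  have r: "\<forall>g\<in>S \<union> S'. in_R n (r g)"
    using S(3) S'(3) by (auto simp: r_def intro!: in_R_add in_R_zero)
  have e1: "(\<Sum>g\<in>S \<union> S'. r g * g) = (\<Sum>g\<in>S \<union> S'. (if g \<in> S then q g * g else 0)) + (\<Sum>g\<in>S \<union> S'. (if g \<in> S' then q' g * g else 0))"
    unfolding sum.distrib[symmetric] by (rule sum.cong) (auto simp: r_def distrib_right)
  have e2: "(\<Sum>g\<in>S \<union> S'. (if g \<in> S then q g * g else 0)) = (\<Sum>g\<in>{g\<in>S \<union> S'. g \<in> S}. q g * g)"
    by (rule sum.inter_filter[symmetric]) (use S S' in auto)
  have e3: "{g\<in>S \<union> S'. g \<in> S} = S" "{g\<in>S \<union> S'. g \<in> S'} = S'" by auto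
  have e4: "(\<Sum>g\<in>S \<union> S'. (if g \<in> S' then q' g * g else 0)) = (\<Sum>g\<in>{g\<in>S \<union> S'. g \<in> S'}. q' g * g)"
    by (rule sum.inter_filter[symmetric]) (use S S' in auto)
  have se: "p + p' = (\<Sum>g\<in>S \<union> S'. r g * g)" unfolding e1 e2 e4 e3 pe pe' ..
  show ?thesis unfolding ideal_gen_def
    apply (rule CollectI, rule exI[of _ "S \<union> S'"], rule exI[of _ r])
    using S(1,2) S'(1,2) r se by simp
qed

lemma ideal_gen_sum: "finite A \<Longrightarrow> (\<And>x. x \<in> A \<Longrightarrow> f x \<in> ideal_gen n G) \<Longrightarrow> sum f A \<in> ideal_gen n G"
  by (induction A rule: finite_induct) (auto intro: ideal_gen_zero ideal_gen_add)

lemma ideal_gen_gen: "g \<in> G \<Longrightarrow> in_R n q \<Longrightarrow> q * g \<in> ideal_gen n G"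
  unfolding ideal_gen_def by (rule CollectI, rule exI[of _ "{g}"], rule exI[of _ "\<lambda>_. q"]) simp

lemma bad_mon_in_J:
  assumes sc: "simplicial_complex n \<Delta>" and km: "Poly_Mapping.keys m \<subseteq> {1..n}" and bad: "\<not> good \<Delta> d m"
  shows "Poly_Mapping.single m (c::'k::field) \<in> J_ideal n \<Delta> d"
proof -
  have inR: "in_R n (Poly_Mapping.single r c)" if "Poly_Mapping.keys r \<subseteq> Poly_Mapping.keys m" for r
    using that km by (auto simp: in_R_def)
  consider (F) "Poly_Mapping.keys m \<notin> \<Delta>" | (P) i where "Poly_Mapping.lookup m i > d + 1"
    using bad unfolding good_def by (meson not_le)
  then show ?thesis
  proof cases
    case F
    define F where "F = Poly_Mapping.keys m"
    define e where "e = (\<Sum>i\<in>F. Poly_Mapping.single i (1::nat))"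
    have le: "Poly_Mapping.lookup e u = (if u \<in> F then 1 else 0)" for u
      unfolding e_def F_def by (rule lookup_indic) simp
    define r where "r = m - e"
    have mr: "m = r + e"
      by (rule poly_mapping_eqI) (auto simp: r_def lookup_add lookup_minus le F_def in_keys_iff)
    have kr: "Poly_Mapping.keys r \<subseteq> Poly_Mapping.keys m"
      by (auto simp: r_def in_keys_iff lookup_minus)
    have g: "(\<Prod>i\<in>F. var i) \<in> Gens n \<Delta> d" using F km by (auto simp: Gens_def F_def)
    have pe: "(\<Prod>i\<in>F. var i) = Poly_Mapping.single e (1::'k)" unfolding e_def by (rule prod_var) (simp add: F_def)
    have "Poly_Mapping.single m c = Poly_Mapping.single r c * (\<Prod>i\<in>F. var i)"
      unfolding pe by (subst mr) (simp add: mult_single)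
    then show ?thesis using ideal_gen_gen[OF g inR[OF kr]] by (simp add: J_def')
  next
    case P
    have "i \<in> Poly_Mapping.keys m" using P by (simp add: in_keys_iff)
    then have i: "i \<in> {1..n}" using km by blast
    define e where "e = Poly_Mapping.single i (d+2)"
    define r where "r = m - e"
    have mr: "m = r + e"
      using P by (intro poly_mapping_eqI) (auto simp: r_def e_def lookup_add lookup_minus lookup_single when_def)
    have kr: "Poly_Mapping.keys r \<subseteq> Poly_Mapping.keys m"
      by (auto simp: r_def in_keys_iff lookup_minus)
    have g: "var i ^ (d+2) \<in> Gens n \<Delta> d" using i by (auto simp: Gens_def)
    have "Poly_Mapping.single m c = Poly_Mapping.single r c * (var i ^ (d+2))"
      unfolding var_pow e_def[symmetric] by (simp add: mult_single mr)
    then show ?thesis using ideal_gen_gen[OF g inR[OF kr]] by (simp add: J_def')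
  qed
qed

lemma poly_expand: "p = (\<Sum>m\<in>Poly_Mapping.keys p. Poly_Mapping.single m (Poly_Mapping.lookup p m))"
  by (rule poly_mapping_eqI) (simp add: lookup_sum lookup_single when_def in_keys_iff)

lemma bad_poly_in_J:
  assumes sc: "simplicial_complex n \<Delta>" and p: "in_R n (p::'k::field mpoly)"
    and bad: "\<forall>m\<in>Poly_Mapping.keys p. \<not> good \<Delta> d m"
  shows "p \<in> J_ideal n \<Delta> d"
proof -
  have "(\<Sum>m\<in>Poly_Mapping.keys p. Poly_Mapping.single m (Poly_Mapping.lookup p m)) \<in> J_ideal n \<Delta> d"
    unfolding J_def'
  proof (rule ideal_gen_sum)
    fix m assume m: "m \<in> Poly_Mapping.keys p"
    show "Poly_Mapping.single m (Poly_Mapping.lookup p m) \<in> ideal_gen n (Gens n \<Delta> d)"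
      using bad_mon_in_J[OF sc, of m d "Poly_Mapping.lookup p m"] p bad m unfolding J_def' in_R_def by blast
  qed simp
  then show ?thesis using poly_expand[of p] by simp
qed

interpretation mvs: vector_space "\<lambda>(c::'k::field) (p::'k mpoly). const c * p"
  by (rule vs)

definition Bk :: "nat set set \<Rightarrow> nat \<Rightarrow> nat \<Rightarrow> (nat \<Rightarrow>\<^sub>0 nat) set" where
  "Bk \<Delta> d k = {m. good \<Delta> d m \<and> mono_deg m = k}"

lemma sc_finite:
  assumes "simplicial_complex n \<Delta>"
  shows "finite \<Delta>" "\<And>F. F \<in> \<Delta> \<Longrightarrow> finite F" "\<And>F. F \<in> \<Delta> \<Longrightarrow> F \<subseteq> {1..n}"
proof -
  have "\<Delta> \<subseteq> Pow {1..n}" using assms unfolding simplicial_complex_def by blast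
  then show "finite \<Delta>" by (rule finite_subset) simp
  show "F \<in> \<Delta> \<Longrightarrow> F \<subseteq> {1..n}" for F using assms unfolding simplicial_complex_def by blast
  then show "F \<in> \<Delta> \<Longrightarrow> finite F" for F using finite_subset by blast
qed

lemma Bk_eq: "Bk \<Delta> d k = (\<Union>F\<in>\<Delta>. Tset d F (int k))"
proof (rule set_eqI)
  fix m :: "nat \<Rightarrow>\<^sub>0 nat"
  have "(\<forall>i. Poly_Mapping.lookup m i \<le> d + 1) \<longleftrightarrow> (\<forall>i\<in>Poly_Mapping.keys m. Poly_Mapping.lookup m i \<le> d + 1)"
    by (metis in_keys_iff zero_le)
  then show "m \<in> Bk \<Delta> d k \<longleftrightarrow> m \<in> (\<Union>F\<in>\<Delta>. Tset d F (int k))"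
    unfolding Bk_def Tset_def good_def mono_deg_def by (auto simp del: of_nat_sum)
qed

lemma Bk_card:
  assumes sc: "simplicial_complex n \<Delta>"
  shows "finite (Bk \<Delta> d k) \<and> card (Bk \<Delta> d k) = (\<Sum>F\<in>\<Delta>. W d (card F) (int k))"
proof -
  have fin: "finite (Tset d F (int k))" if "F \<in> \<Delta>" for F
    using Tset_card sc_finite(2)[OF sc that] by blast
  have disj: "\<forall>F\<in>\<Delta>. \<forall>G\<in>\<Delta>. F \<noteq> G \<longrightarrow> Tset d F (int k) \<inter> Tset d G (int k) = {}"
    by (auto simp: Tset_def)
  have "card (Bk \<Delta> d k) = (\<Sum>F\<in>\<Delta>. card (Tset d F (int k)))"
    unfolding Bk_eq by (rule card_UN_disjoint[OF sc_finite(1)[OF sc]]) (use fin disj in auto)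
  also have "\<dots> = (\<Sum>F\<in>\<Delta>. W d (card F) (int k))"
    by (rule sum.cong) (use Tset_card sc_finite(2)[OF sc] in auto)
  finally show ?thesis unfolding Bk_eq using fin sc_finite(1)[OF sc] by auto
qed

definition proj :: "(nat \<Rightarrow>\<^sub>0 nat) set \<Rightarrow> 'k::field mpoly \<Rightarrow> 'k mpoly" where
  "proj B p = Abs_poly_mapping (\<lambda>m. if m \<in> B then Poly_Mapping.lookup p m else 0)"

lemma lookup_proj: "finite B \<Longrightarrow> Poly_Mapping.lookup (proj B p) m = (if m \<in> B then Poly_Mapping.lookup p m else 0)"
  unfolding proj_def
  by (subst lookup_Abs_poly_mapping) (auto intro: finite_subset[of _ B])

lemma keys_lin: "Poly_Mapping.keys (\<Sum>s\<in>S. const (c s) * s) \<subseteq> (\<Union>s\<in>S. Poly_Mapping.keys (s::'k::field mpoly))"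
  using keys_sum[of "\<lambda>s. const (c s) * s" S] keys_const_mult by blast

lemma mif: "(a::'k::field) * (if P then 1 else 0) = (if P then a else 0)"
  by simp

lemma upper:
  assumes sc: "simplicial_complex n \<Delta>" and S: "finite S" "S \<subseteq> homog_piece n k"
    and ind: "lin_indep_mod (J_ideal n \<Delta> d) (S :: 'k::field mpoly set)"
  shows "card S \<le> card (Bk \<Delta> d k)"
proof -
  define B where "B = Bk \<Delta> d k"
  have finB: "finite B" using Bk_card[OF sc] by (simp add: B_def)
  have key: "\<forall>s\<in>S. c s = 0" if z: "(\<Sum>s\<in>S. const (c s) * proj B s) = 0" for c
  proof -
    define p where "p = (\<Sum>s\<in>S. const (c s) * s)"
    have "proj B p = (\<Sum>s\<in>S. const (c s) * proj B s)"
      by (rule poly_mapping_eqI)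
        (simp add: p_def lookup_proj[OF finB] lookup_sum lookup_const_mult sum_distrib_left)
    then have pz: "proj B p = 0" using z by simp
    have kp: "Poly_Mapping.keys p \<subseteq> (\<Union>s\<in>S. Poly_Mapping.keys s)" unfolding p_def by (rule keys_lin)
    have inR: "in_R n p" using kp S(2) by (auto simp: in_R_def homog_piece_def)
    have bad: "\<forall>m\<in>Poly_Mapping.keys p. \<not> good \<Delta> d m"
    proof
      fix m assume m: "m \<in> Poly_Mapping.keys p"
      have "mono_deg m = k" using m kp S(2) by (auto simp: homog_piece_def)
      moreover have "m \<notin> B"
      proof
        assume "m \<in> B"
        then have "Poly_Mapping.lookup (proj B p) m = Poly_Mapping.lookup p m" by (simp add: lookup_proj[OF finB])
        then show False using m pz by (simp add: in_keys_iff)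
      qed
      ultimately show "\<not> good \<Delta> d m" by (simp add: B_def Bk_def)
    qed
    have "p \<in> J_ideal n \<Delta> d" by (rule bad_poly_in_J[OF sc inR bad])
    then show ?thesis using ind unfolding lin_indep_mod_def p_def by blast
  qed
  have inj: "inj_on (proj B) S"
  proof (rule inj_onI, rule ccontr)
    fix s1 s2 assume s: "s1 \<in> S" "s2 \<in> S" "proj B s1 = proj B s2" "s1 \<noteq> s2"
    define c where "c s = (if s = s1 then 1 else if s = s2 then -1 else (0::'k))" for s
    have "(\<Sum>s\<in>S. const (c s) * proj B s) = (\<Sum>s\<in>{s1, s2}. const (c s) * proj B s)"
      by (rule sum.mono_neutral_right) (use S s in \<open>auto simp: c_def const_def\<close>)
    also have "\<dots> = proj B s1 - proj B s2"
      using s(4) by (simp add: c_def const_def single_uminus)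
    finally have "(\<Sum>s\<in>S. const (c s) * proj B s) = 0" using s(3) by simp
    then have "c s1 = 0" using key s(1) by blast
    then show False by (simp add: c_def)
  qed
  have indep: "\<not> mvs.dependent (proj B ` S)"
  proof
    assume "mvs.dependent (proj B ` S)"
    then obtain u where u: "\<exists>v\<in>proj B ` S. u v \<noteq> 0" "(\<Sum>v\<in>proj B ` S. const (u v) * v) = 0"
      using mvs.dependent_finite[of "proj B ` S"] S(1) by auto
    have "(\<Sum>s\<in>S. const (u (proj B s)) * proj B s) = 0"
      using u(2) by (simp add: sum.reindex[OF inj])
    then have "\<forall>s\<in>S. u (proj B s) = 0" by (rule key)
    then show False using u(1) by auto
  qed
  have span: "proj B ` S \<subseteq> mvs.span ((\<lambda>m. Poly_Mapping.single m (1::'k)) ` B)"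
  proof
    fix v assume "v \<in> proj B ` S"
    then obtain s where v: "v = proj B s" by blast
    have "v = (\<Sum>m\<in>B. const (Poly_Mapping.lookup s m) * Poly_Mapping.single m 1)"
      by (rule poly_mapping_eqI)
        (simp add: v lookup_proj[OF finB] lookup_sum lookup_const_mult lookup_single when_def finB mif)
    also have "\<dots> \<in> mvs.span ((\<lambda>m. Poly_Mapping.single m (1::'k)) ` B)"
      by (intro mvs.span_sum mvs.span_scale mvs.span_base) auto
    finally show "v \<in> mvs.span ((\<lambda>m. Poly_Mapping.single m (1::'k)) ` B)" .
  qed
  have "card (proj B ` S) \<le> card ((\<lambda>m. Poly_Mapping.single m (1::'k)) ` B)"
    using mvs.independent_span_bound[OF _ indep span] finB by blast
  also have "\<dots> \<le> card B" by (rule card_image_le[OF finB])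
  finally show ?thesis using card_image[OF inj] by (simp add: B_def)
qed

lemma lower:
  assumes sc: "simplicial_complex n \<Delta>"
  shows "lin_indep_mod (J_ideal n \<Delta> d) ((\<lambda>m. Poly_Mapping.single m (1::'k::field)) ` Bk \<Delta> d k)"
    and "(\<lambda>m. Poly_Mapping.single m (1::'k::field)) ` Bk \<Delta> d k \<subseteq> homog_piece n k"
    and "card ((\<lambda>m. Poly_Mapping.single m (1::'k::field)) ` Bk \<Delta> d k) = card (Bk \<Delta> d k)"
proof -
  define B where "B = Bk \<Delta> d k"
  have finB: "finite B" using Bk_card[OF sc] by (simp add: B_def)
  have inj: "inj_on (\<lambda>m. Poly_Mapping.single m (1::'k)) B"
    by (rule inj_onI) (metis inj_single lookup_single_eq one_neq_zero keys_single singletonD singletonI)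
  show "card ((\<lambda>m. Poly_Mapping.single m (1::'k::field)) ` Bk \<Delta> d k) = card (Bk \<Delta> d k)"
    using card_image[OF inj] by (simp add: B_def)
  show "(\<lambda>m. Poly_Mapping.single m (1::'k::field)) ` Bk \<Delta> d k \<subseteq> homog_piece n k"
  proof
    fix x assume "x \<in> (\<lambda>m. Poly_Mapping.single m (1::'k::field)) ` Bk \<Delta> d k"
    then obtain m where m: "x = Poly_Mapping.single m 1" "m \<in> Bk \<Delta> d k" by blast
    then have "Poly_Mapping.keys m \<subseteq> {1..n}" using sc_finite(3)[OF sc] by (auto simp: Bk_def good_def)
    then show "x \<in> homog_piece n k" using m by (simp add: homog_piece_def in_R_def Bk_def)
  qed
  show "lin_indep_mod (J_ideal n \<Delta> d) ((\<lambda>m. Poly_Mapping.single m (1::'k::field)) ` Bk \<Delta> d k)"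
    unfolding lin_indep_mod_def
  proof (intro allI impI ballI)
    fix c and s :: "'k mpoly"
    assume J: "(\<Sum>s\<in>(\<lambda>m. Poly_Mapping.single m (1::'k)) ` Bk \<Delta> d k. const (c s) * s) \<in> J_ideal n \<Delta> d"
      and s: "s \<in> (\<lambda>m. Poly_Mapping.single m 1) ` Bk \<Delta> d k"
    obtain m0 where m0: "m0 \<in> B" "s = Poly_Mapping.single m0 1" using s by (auto simp: B_def)
    define p where "p = (\<Sum>s\<in>(\<lambda>m. Poly_Mapping.single m (1::'k)) ` B. const (c s) * s)"
    have "p = (\<Sum>m\<in>B. const (c (Poly_Mapping.single m 1)) * Poly_Mapping.single m 1)"
      unfolding p_def by (rule sum.reindex[OF inj, unfolded comp_def])
    then have "Poly_Mapping.lookup p m0 = c s"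
      using finB m0 by (simp add: lookup_sum lookup_const_mult lookup_single when_def mif)
    moreover have "\<not> good \<Delta> d m0" if "m0 \<in> Poly_Mapping.keys p"
      using J_keys_bad[OF sc _ that] J by (simp add: p_def B_def)
    moreover have "good \<Delta> d m0" using m0 by (simp add: B_def Bk_def)
    ultimately show "c s = 0" by (auto simp: in_keys_iff)
  qed
qed

lemma quot_dim_eq:
  assumes sc: "simplicial_complex n \<Delta>"
  shows "quot_dim n (J_ideal n \<Delta> d :: 'k::field mpoly set) k = card (Bk \<Delta> d k)"
  unfolding quot_dim_def
proof (rule Max_eqI)
  let ?A = "{card S |S. finite S \<and> S \<subseteq> homog_piece n k \<and> lin_indep_mod (J_ideal n \<Delta> d :: 'k mpoly set) S}"
  have "?A \<subseteq> {..card (Bk \<Delta> d k)}" using upper[OF sc] by auto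
  then show "finite ?A" using finite_subset by blast
  show "y \<le> card (Bk \<Delta> d k)" if "y \<in> ?A" for y using that upper[OF sc] by auto
  have "finite ((\<lambda>m. Poly_Mapping.single m (1::'k::field)) ` Bk \<Delta> d k)"
    using Bk_card[OF sc] by blast
  then show "card (Bk \<Delta> d k) \<in> ?A"
    using lower[OF sc, where 'k='k and d=d and k=k] by (metis (mono_tags, lifting) mem_Collect_eq)
qed

lemma card_filter_sum: "finite A \<Longrightarrow> card {x\<in>A. P x} = (\<Sum>x\<in>A. if P x then 1 else 0)"
  by (simp add: sum.inter_filter[symmetric])

lemma t_facts:
  fixes d :: nat
  assumes "d > 0"
  shows "2 * ((d + 2) choose 2) = (d + 2) * (d + 1)" "(d + 2) choose 2 \<ge> 3"
proof -
  have ev: "even ((d + 2) * (d + 1))" by simp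
  show e: "2 * ((d + 2) choose 2) = (d + 2) * (d + 1)"
    using ev by (simp add: choose_two)
  have "(d + 2) * (d + 1) \<ge> 3 * 2" using assms by (intro mult_mono) auto
  then show "(d + 2) choose 2 \<ge> 3" using e by linarith
qed

lemma main_ineq:
  assumes sc: "simplicial_complex n \<Delta>" and cd: "cdim \<Delta> d" and d0: "d > 0"
    and f: "fvec \<Delta> (d - 1) \<ge> fvec \<Delta> d"
  shows "(\<Sum>F\<in>\<Delta>. int (W d (card F) (int ((d + 2) choose 2))))
       \<le> (\<Sum>F\<in>\<Delta>. int (W d (card F) (int (((d + 2) choose 2) - 1))))"
proof -
  define t where "t = (d + 2) choose 2"
  define T where "T = int t"
  have e1: "2 * t = (d + 2) * (d + 1)" "t \<ge> 3" using t_facts[OF d0] unfolding t_def by auto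
  have "int (2 * t) = int ((d + 2) * (d + 1))" using e1(1) by (rule arg_cong)
  then have tf1: "2 * T = (int d + 2) * (int d + 1)" unfolding T_def by (simp add: algebra_simps)
  have tf: "2 * T = (int d + 2) * (int d + 1)" "T \<ge> 3" using tf1 e1(2) by (auto simp: T_def)
  have Tm: "int (t - 1) = T - 1" using tf(2) by (simp add: T_def)
  define X where "X = int (W d d (T - 1)) - int (W d d T)"
  have Wle: "W d j T \<le> W d j (T - 1)" if "j \<le> d" for j
  proof (rule W_Q)
    define e where "e = int j * (int d + 2)"
    define D2 where "D2 = int d * (int d + 2)"
    have "e \<le> D2" unfolding e_def D2_def using that by (intro mult_right_mono) auto
    moreover have "2 * T = D2 + (int d + 2)" unfolding D2_def using tf(1) by (simp add: algebra_simps)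
    moreover have "(0::int) \<le> int d" by simp
    ultimately have "0 \<le> 2 * (T - 1) - e" by (simp add: algebra_simps)
    then have "0 \<le> 2 * (T - 1) - int j * (int d + 2)" by (simp add: e_def)
    then show "\<bar>2 * (T - 1) - int j * (int d + 2)\<bar> \<le> \<bar>2 * T - int j * (int d + 2)\<bar>" by simp
  qed
  have X0: "X \<ge> 0" using Wle[of d] by (simp add: X_def)
  have Xd1: "int (W d (Suc d) (T - 1)) - int (W d (Suc d) T) = - X"
  proof -
    have s: "W d d (T - int d - 2) = W d d T"
    proof -
      have "W d d (T - int d - 2) = W d d (int d * (int d + 2) - (T - int d - 2))" by (rule W_sym)
      also have "int d * (int d + 2) - (T - int d - 2) = T" using tf(1) by (simp add: algebra_simps)
      finally show ?thesis .
    qed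
    show ?thesis using W_step[of d d T] s by (simp add: X_def del: W.simps)
  qed
  define g where "g F = int (W d (card F) (T - 1)) - int (W d (card F) T)" for F :: "nat set"
  define h where "h F = (if card F = d then X else if card F = d + 1 then - X else 0)" for F :: "nat set"
  have gh: "h F \<le> g F" if "F \<in> \<Delta>" for F
  proof -
    have "card F \<le> d + 1" using cd that unfolding cdim_def by blast
    then consider "card F < d" | "card F = d" | "card F = d + 1" by linarith
    then show ?thesis
    proof cases
      case 1 then show ?thesis using Wle[of "card F"] by (simp add: g_def h_def)
    next
      case 2 then show ?thesis by (simp add: g_def h_def X_def)
    next
      case 3 then show ?thesis using Xd1 by (simp add: g_def h_def)
    qed
  qed
  have finD: "finite \<Delta>" using sc_finite(1)[OF sc] .
  have "(\<Sum>F\<in>\<Delta>. h F) = (\<Sum>F\<in>\<Delta>. (if card F = d then X else 0)) + (\<Sum>F\<in>\<Delta>. (if card F = d + 1 then - X else 0))"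
    unfolding sum.distrib[symmetric] by (rule sum.cong) (auto simp: h_def)
  also have "\<dots> = int (fvec \<Delta> (d - 1)) * X - int (fvec \<Delta> d) * X"
  proof -
    have a: "(\<Sum>F\<in>\<Delta>. (if card F = d then X else 0)) = (\<Sum>F\<in>{F\<in>\<Delta>. card F = d}. X)"
      by (rule sum.inter_filter[symmetric, OF finD])
    have b: "(\<Sum>F\<in>\<Delta>. (if card F = d + 1 then - X else 0)) = (\<Sum>F\<in>{F\<in>\<Delta>. card F = d + 1}. - X)"
      by (rule sum.inter_filter[symmetric, OF finD])
    have c: "d - 1 + 1 = d" using d0 by simp
    show ?thesis unfolding a b fvec_def c by simp
  qed
  also have "\<dots> = (int (fvec \<Delta> (d - 1)) - int (fvec \<Delta> d)) * X" by (simp add: algebra_simps)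
  also have "\<dots> \<ge> 0" using f X0 by simp
  finally have h0: "0 \<le> (\<Sum>F\<in>\<Delta>. h F)" .
  have "(\<Sum>F\<in>\<Delta>. h F) \<le> (\<Sum>F\<in>\<Delta>. g F)" by (rule sum_mono) (rule gh)
  then have "0 \<le> (\<Sum>F\<in>\<Delta>. g F)" using h0 by linarith
  then have fin: "(\<Sum>F\<in>\<Delta>. int (W d (card F) T)) \<le> (\<Sum>F\<in>\<Delta>. int (W d (card F) (T - 1)))"
    unfolding g_def sum_subtractf by linarith
  have r1: "int (((d + 2) choose 2) - 1) = T - 1" using Tm unfolding t_def .
  have r2: "int ((d + 2) choose 2) = T" by (simp add: T_def t_def)
  show ?thesis unfolding r1 r2 by (rule fin)
qed

lemma wb_f:
  assumes sc: "simplicial_complex n \<Delta>" and d0: "d > 0" and wb: "without_boundary \<Delta> d"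
  shows "fvec \<Delta> d \<le> fvec \<Delta> (d - 1)"
proof -
  define A1 where "A1 = {G\<in>\<Delta>. card G = d}"
  define A2 where "A2 = {F\<in>\<Delta>. card F = d + 1}"
  have finD: "finite \<Delta>" using sc_finite(1)[OF sc] .
  have f1: "finite A1" "finite A2" using finD by (auto simp: A1_def A2_def)
  define S where "S = (\<Sum>G\<in>A1. \<Sum>F\<in>A2. if G \<subseteq> F then 1 else (0::nat))"
  have "S = (\<Sum>G\<in>A1. card {F\<in>A2. G \<subseteq> F})"
    unfolding S_def by (rule sum.cong) (simp_all add: card_filter_sum[OF f1(2)])
  also have "\<dots> = (\<Sum>G\<in>A1. 2)"
  proof (rule sum.cong)
    fix G assume "G \<in> A1"
    then have "card {F\<in>\<Delta>. card F = d + 1 \<and> G \<subseteq> F} = 2" using wb by (auto simp: A1_def without_boundary_def)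
    moreover have "{F\<in>A2. G \<subseteq> F} = {F\<in>\<Delta>. card F = d + 1 \<and> G \<subseteq> F}" by (auto simp: A2_def)
    ultimately show "card {F\<in>A2. G \<subseteq> F} = 2" by simp
  qed simp
  finally have S1: "S = 2 * card A1" by simp
  have "S = (\<Sum>F\<in>A2. \<Sum>G\<in>A1. if G \<subseteq> F then 1 else (0::nat))"
    unfolding S_def by (rule sum.swap)
  also have "\<dots> = (\<Sum>F\<in>A2. card {G\<in>A1. G \<subseteq> F})"
    by (rule sum.cong) (simp_all add: card_filter_sum[OF f1(1)])
  also have "\<dots> = (\<Sum>F\<in>A2. d + 1)"
  proof (rule sum.cong)
    fix F assume F: "F \<in> A2"
    have finF: "finite F" using sc_finite(2)[OF sc] F by (auto simp: A2_def)
    have "{G\<in>A1. G \<subseteq> F} = {G. G \<subseteq> F \<and> card G = d}"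
      using F sc unfolding A1_def A2_def simplicial_complex_def by blast
    then have "card {G\<in>A1. G \<subseteq> F} = card F choose d" using n_subsets[OF finF, of d] by simp
    also have "\<dots> = d + 1" using F by (simp add: A2_def)
    finally show "card {G\<in>A1. G \<subseteq> F} = d + 1" .
  qed simp
  finally have S2: "S = (d + 1) * card A2" by simp
  have "2 * card A2 \<le> (d + 1) * card A2" using d0 by (intro mult_right_mono) auto
  then have "card A2 \<le> card A1" using S1 S2 by linarith
  moreover have "d - 1 + 1 = d" using d0 by simp
  ultimately show ?thesis unfolding fvec_def A1_def A2_def by simp
qed

theorem theorem6p6:
  fixes n d :: nat and \<Delta> :: "nat set set"
  assumes "simplicial_complex n \<Delta>"
    and "cdim \<Delta> d"
    and "d > 0"
  defines "t \<equiv> (d + 2) choose 2"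
  shows "(fvec \<Delta> (d - 1) \<ge> fvec \<Delta> d \<longrightarrow>
            quot_dim n (J_ideal n \<Delta> d :: 'k::field mpoly set) (t - 1)
              \<ge> quot_dim n (J_ideal n \<Delta> d :: 'k mpoly set) t)
       \<and> (pseudomanifold \<Delta> d \<and> without_boundary \<Delta> d
            \<and> top_homology_nonzero TYPE('k) \<Delta> d \<longrightarrow>
            quot_dim n (J_ideal n \<Delta> d :: 'k mpoly set) (t - 1)
              \<ge> quot_dim n (J_ideal n \<Delta> d :: 'k mpoly set) t)"
proof -
  have q: "quot_dim n (J_ideal n \<Delta> d :: 'k mpoly set) k = (\<Sum>F\<in>\<Delta>. W d (card F) (int k))" for k
    using quot_dim_eq[OF assms(1)] Bk_card[OF assms(1)] by metis
  have P1: "quot_dim n (J_ideal n \<Delta> d :: 'k mpoly set) (t - 1)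
              \<ge> quot_dim n (J_ideal n \<Delta> d :: 'k mpoly set) t"
    if f: "fvec \<Delta> (d - 1) \<ge> fvec \<Delta> d"
  proof -
    have "(\<Sum>F\<in>\<Delta>. int (W d (card F) (int t))) \<le> (\<Sum>F\<in>\<Delta>. int (W d (card F) (int (t - 1))))"
      using main_ineq[OF assms(1,2,3) f] unfolding t_def .
    then have "int (\<Sum>F\<in>\<Delta>. W d (card F) (int t)) \<le> int (\<Sum>F\<in>\<Delta>. W d (card F) (int (t - 1)))"
      by (simp only: of_nat_sum)
    then show ?thesis unfolding q by (simp only: of_nat_le_iff)
  qed
  show ?thesis
    using P1 wb_f[OF assms(1) assms(3)] by blast
qed

end
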